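(* Let $a,b$ be non-zero constants with $a\neq b$, and let $w=w(x,y,z)$ be a function on an open set $B\subset\mathbb{R}^3$ with continuous second derivatives and $w_x\neq 0$. On $B\times\mathbb{R}^2$ with coordinates $(x,y,z,p_0,p_1)$ consider the bivectors $P_0,P_1$ with components (so that $\{f,g\}_i=\sum_{\alpha,\beta}P_i^{\alpha\beta}\partial_\alpha f\,\partial_\beta g$) \[ P_0= \begin{pmatrix} 0&0&0&-w_z/w_x&-w_y/w_x\\ 0&0&0&0&1\\ 0&0&0&1&0\\ w_z/w_x&0&-1&0&0\\ w_y/w_x&-1&0&0&0 \end{pmatrix}, \qquad P_1= \begin{pmatrix} 0&0&0&0&0\\ 0&0&0&0&b\\ 0&0&0&a&0\\ 0&0&-a&0&0\\ 0&-b&0&0&0 \end{pmatrix}. \] Then $P_0$ and $P_1$ define a compatible Poisson pencil (i.e. $P_0+\lambda P_1$ satisfies the Jacobi identity for all $\lambda$) if and only if $w$ satisfies the dispersionless Hirota equation \[ (b-a)\,w_x w_{yz}+a\, w_y w_{zx}-b\, w_z w_{xy}=0. \]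
   Context: A bivector $P$ defines a bracket $\{f,g\}=\sum_{\alpha,\beta}P^{\alpha\beta}\partial_\alpha f\partial_\beta g$; it is Poisson if this bracket satisfies the Jacobi identity. A compatible Poisson pencil is a pair of Poisson bivectors whose every linear combination $P_0+\lambda P_1$ is Poisson. *)

theory Defs
  imports "HOL-Analysis.Analysis"
begin

definition pd :: "'n::finite \<Rightarrow> (real^'n \<Rightarrow> real) \<Rightarrow> real^'n \<Rightarrow> real" where
  "pd i f u = frechet_derivative f (at u) (axis i 1)"

definition C1_on :: "(real^'n::finite) set \<Rightarrow> (real^'n \<Rightarrow> real) \<Rightarrow> bool" where
  "C1_on U f \<longleftrightarrow> (\<forall>u\<in>U. f differentiable (at u)) \<and> (\<forall>i. continuous_on U (pd i f))"

definition C2_on :: "(real^'n::finite) set \<Rightarrow> (real^'n \<Rightarrow> real) \<Rightarrow> bool" where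
  "C2_on U f \<longleftrightarrow> C1_on U f \<and> (\<forall>i. C1_on U (pd i f))"

definition pbracket :: "(real^'n \<Rightarrow> real^'n^'n) \<Rightarrow> (real^'n::finite \<Rightarrow> real) \<Rightarrow> (real^'n \<Rightarrow> real) \<Rightarrow> real^'n \<Rightarrow> real" where
  "pbracket P f g u = (\<Sum>a\<in>UNIV. \<Sum>b\<in>UNIV. P u $ a $ b * pd a f u * pd b g u)"

definition is_poisson :: "(real^'n::finite) set \<Rightarrow> (real^'n \<Rightarrow> real^'n^'n) \<Rightarrow> bool" where
  "is_poisson U P \<longleftrightarrow> (\<forall>f g h. C2_on U f \<and> C2_on U g \<and> C2_on U h \<longrightarrow>
     (\<forall>u\<in>U. pbracket P f (pbracket P g h) u + pbracket P g (pbracket P h f) u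
             + pbracket P h (pbracket P f g) u = 0))"

definition compatible_poisson_pencil :: "(real^'n::finite) set \<Rightarrow> (real^'n \<Rightarrow> real^'n^'n) \<Rightarrow> (real^'n \<Rightarrow> real^'n^'n) \<Rightarrow> bool" where
  "compatible_poisson_pencil U P0 P1 \<longleftrightarrow> is_poisson U P0 \<and> is_poisson U P1 \<and>
     (\<forall>t::real. is_poisson U (\<lambda>u. P0 u + t *\<^sub>R P1 u))"

definition proj3 :: "real^5 \<Rightarrow> real^3" where
  "proj3 u = vector [u$1, u$2, u$3]"

definition P0_mat :: "(real^3 \<Rightarrow> real) \<Rightarrow> real^5 \<Rightarrow> real^5^5" where
  "P0_mat w u = (let q = proj3 u; wx = pd 1 w q; wy = pd 2 w q; wz = pd 3 w q in
     vector [vector [0, 0, 0, -wz/wx, -wy/wx],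
             vector [0, 0, 0, 0, 1],
             vector [0, 0, 0, 1, 0],
             vector [wz/wx, 0, -1, 0, 0],
             vector [wy/wx, -1, 0, 0, 0]])"

definition P1_mat :: "real \<Rightarrow> real \<Rightarrow> real^5 \<Rightarrow> real^5^5" where
  "P1_mat a b u =
     vector [vector [0, 0, 0, 0, 0],
             vector [0, 0, 0, 0, b],
             vector [0, 0, 0, a, 0],
             vector [0, 0, -a, 0, 0],
             vector [0, -b, 0, 0, 0]]"

end

theory Submission imports Defs begin

lemma pd_has: "(f has_derivative f') (at u) \<Longrightarrow> pd i f u = f' (axis i 1)"
  unfolding pd_def using frechet_derivative_at by metis

lemma line_deriv:
  fixes f :: "real^'n::finite \<Rightarrow> real"
  assumes "f differentiable at (x + s *\<^sub>R v)"
  shows "((\<lambda>s. f (x + s *\<^sub>R v)) has_real_derivative frechet_derivative f (at (x + s *\<^sub>R v)) v) (at s)"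
proof -
  have d: "(f has_derivative frechet_derivative f (at (x + s *\<^sub>R v))) (at (x + s *\<^sub>R v))"
    using assms frechet_derivative_works by blast
  have l: "((\<lambda>s. x + s *\<^sub>R v) has_derivative (\<lambda>s. s *\<^sub>R v)) (at s)"
    by (auto intro!: derivative_eq_intros)
  have "((\<lambda>s. f (x + s *\<^sub>R v)) has_derivative (\<lambda>y. frechet_derivative f (at (x + s *\<^sub>R v)) (y *\<^sub>R v))) (at s)"
    using has_derivative_compose[OF l d] by (simp add: o_def)
  moreover have "linear (frechet_derivative f (at (x + s *\<^sub>R v)))"
    using d has_derivative_linear by blast
  ultimately have "((\<lambda>s. f (x + s *\<^sub>R v)) has_derivative (\<lambda>y. y * frechet_derivative f (at (x + s *\<^sub>R v)) v)) (at s)"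
    by (simp add: linear_scale)
  then show ?thesis
    unfolding has_field_derivative_def
    by (rule has_derivative_eq_rhs) (auto simp: fun_eq_iff mult.commute)
qed

lemma line_deriv_pd:
  fixes f :: "real^'n::finite \<Rightarrow> real"
  assumes "f differentiable at (x + s *\<^sub>R axis i 1)"
  shows "((\<lambda>s. f (x + s *\<^sub>R axis i 1)) has_real_derivative pd i f (x + s *\<^sub>R axis i 1)) (at s)"
  using line_deriv[OF assms] unfolding pd_def .

lemma mvt_mixed:
  fixes f :: "real^'n::finite \<Rightarrow> real"
  assumes df: "\<forall>y\<in>ball u d. f differentiable at y"
    and dfi: "\<forall>y\<in>ball u d. pd i f differentiable at y"
    and h: "0 < h" "2*h < d"
  shows "\<exists>p\<in>ball u d. f (u + h *\<^sub>R axis i 1 + h *\<^sub>R axis j 1) - f (u + h *\<^sub>R axis j 1)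
     - f (u + h *\<^sub>R axis i 1) + f u = h * h * pd j (pd i f) p"
proof -
  let ?ei = "axis i (1::real) :: real^'n" and ?ej = "axis j (1::real) :: real^'n"
  have inb: "u + s *\<^sub>R ?ei + t *\<^sub>R ?ej \<in> ball u d" if "0 \<le> s" "s \<le> h" "0 \<le> t" "t \<le> h" for s t
  proof -
    have "norm (s *\<^sub>R ?ei + t *\<^sub>R ?ej) \<le> norm (s *\<^sub>R ?ei) + norm (t *\<^sub>R ?ej)"
      by (rule norm_triangle_ineq)
    also have "\<dots> = s + t" using that by simp
    moreover have "dist u (u + (s *\<^sub>R ?ei + t *\<^sub>R ?ej)) = norm (s *\<^sub>R ?ei + t *\<^sub>R ?ej)"
      by (metis add_diff_cancel_left' dist_commute dist_norm)
    ultimately show ?thesis using that h by (simp add: add.assoc)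
  qed
  define g where "g s = f (u + h *\<^sub>R ?ej + s *\<^sub>R ?ei) - f (u + s *\<^sub>R ?ei)" for s
  have gd: "(g has_real_derivative (pd i f (u + h *\<^sub>R ?ej + s *\<^sub>R ?ei) - pd i f (u + s *\<^sub>R ?ei))) (at s)"
    if "0 \<le> s" "s \<le> h" for s
    unfolding g_def
  proof (intro DERIV_diff line_deriv_pd)
    show "f differentiable at (u + h *\<^sub>R ?ej + s *\<^sub>R ?ei)"
      using df inb[of s h] that h by (simp add: algebra_simps)
    show "f differentiable at (u + s *\<^sub>R ?ei)"
      using df inb[of s 0] that h by (simp add: algebra_simps)
  qed
  obtain s where s: "0 < s" "s < h" "g h - g 0 = (h - 0) * (pd i f (u + h *\<^sub>R ?ej + s *\<^sub>R ?ei) - pd i f (u + s *\<^sub>R ?ei))"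
    using MVT2[of 0 h g, OF h(1) gd] by auto
  define k where "k t = pd i f (u + s *\<^sub>R ?ei + t *\<^sub>R ?ej)" for t
  have kd: "(k has_real_derivative pd j (pd i f) (u + s *\<^sub>R ?ei + t *\<^sub>R ?ej)) (at t)"
    if "0 \<le> t" "t \<le> h" for t
    unfolding k_def
    by (rule line_deriv_pd) (use dfi inb[of s t] that s in auto)
  obtain t where t: "0 < t" "t < h" "k h - k 0 = (h - 0) * pd j (pd i f) (u + s *\<^sub>R ?ei + t *\<^sub>R ?ej)"
    using MVT2[of 0 h k, OF h(1) kd] by auto
  have "f (u + h *\<^sub>R ?ei + h *\<^sub>R ?ej) - f (u + h *\<^sub>R ?ej) - f (u + h *\<^sub>R ?ei) + f u = g h - g 0"
    by (simp add: g_def algebra_simps)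
  also have "\<dots> = h * (k h - k 0)" using s(3) by (simp add: k_def algebra_simps)
  also have "\<dots> = h * h * pd j (pd i f) (u + s *\<^sub>R ?ei + t *\<^sub>R ?ej)" using t(3) by simp
  finally show ?thesis using inb[of s t] s t by (intro bexI[where x="u + s *\<^sub>R ?ei + t *\<^sub>R ?ej"]) auto
qed

lemma schwarz:
  fixes f :: "real^'n::finite \<Rightarrow> real"
  assumes U: "open U" "u \<in> U" and f: "C2_on U f"
  shows "pd i (pd j f) u = pd j (pd i f) u"
proof (rule ccontr)
  assume ne: "pd i (pd j f) u \<noteq> pd j (pd i f) u"
  define e where "e = \<bar>pd i (pd j f) u - pd j (pd i f) u\<bar> / 2"
  have e: "e > 0" using ne by (simp add: e_def)
  have c1: "isCont (pd i (pd j f)) u" "isCont (pd j (pd i f)) u"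
    using f U unfolding C2_on_def C1_on_def by (auto simp: continuous_on_eq_continuous_at)
  obtain d1 where d1: "d1 > 0" "\<forall>y. dist y u < d1 \<longrightarrow> dist (pd i (pd j f) y) (pd i (pd j f) u) < e"
    using c1(1) e unfolding continuous_at_eps_delta by blast
  obtain d2 where d2: "d2 > 0" "\<forall>y. dist y u < d2 \<longrightarrow> dist (pd j (pd i f) y) (pd j (pd i f) u) < e"
    using c1(2) e unfolding continuous_at_eps_delta by blast
  obtain d3 where d3: "d3 > 0" "ball u d3 \<subseteq> U" using U open_contains_ball by blast
  define d where "d = min d1 (min d2 d3)"
  have d: "d > 0" "ball u d \<subseteq> U" using d1 d2 d3 by (auto simp: d_def)
  define h where "h = d / 3"
  have h: "0 < h" "2 * h < d" using d by (auto simp: h_def)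
  have df: "\<forall>y\<in>ball u d. f differentiable at y" and dfi: "\<forall>y\<in>ball u d. pd i f differentiable at y"
    and dfj: "\<forall>y\<in>ball u d. pd j f differentiable at y"
    using f d unfolding C2_on_def C1_on_def by auto
  obtain p where p: "p \<in> ball u d" "f (u + h *\<^sub>R axis i 1 + h *\<^sub>R axis j 1) - f (u + h *\<^sub>R axis j 1)
     - f (u + h *\<^sub>R axis i 1) + f u = h * h * pd j (pd i f) p"
    using mvt_mixed[OF df dfi h] by blast
  obtain q where q: "q \<in> ball u d" "f (u + h *\<^sub>R axis j 1 + h *\<^sub>R axis i 1) - f (u + h *\<^sub>R axis i 1)
     - f (u + h *\<^sub>R axis j 1) + f u = h * h * pd i (pd j f) q"
    using mvt_mixed[OF df dfj h, of i] by blast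
  have "h * h * pd j (pd i f) p = h * h * pd i (pd j f) q"
    using p(2) q(2) by (simp add: algebra_simps)
  then have eq: "pd j (pd i f) p = pd i (pd j f) q" using h by simp
  have "dist p u < d2" "dist q u < d1" using p q by (auto simp: d_def dist_commute)
  then have "\<bar>pd j (pd i f) p - pd j (pd i f) u\<bar> < e" "\<bar>pd i (pd j f) q - pd i (pd j f) u\<bar> < e"
    using d1 d2 by (auto simp: dist_real_def)
  moreover have "\<And>A B X Y::real. X = Y \<Longrightarrow> \<bar>X - B\<bar> < \<bar>A - B\<bar> / 2 \<Longrightarrow> \<bar>Y - A\<bar> < \<bar>A - B\<bar> / 2 \<Longrightarrow> False"
    by (auto simp: abs_if split: if_splits)
  ultimately show False using eq unfolding e_def by blast
qed

lemma rot3: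
  fixes W :: "'n::finite \<Rightarrow> 'n \<Rightarrow> 'n \<Rightarrow> real"
  shows "(\<Sum>x\<in>UNIV. \<Sum>y\<in>UNIV. \<Sum>z\<in>UNIV. W y z x) = (\<Sum>y\<in>UNIV. \<Sum>z\<in>UNIV. \<Sum>x\<in>UNIV. W y z x)"
proof -
  have "(\<Sum>x\<in>UNIV. \<Sum>y\<in>UNIV. \<Sum>z\<in>UNIV. W y z x) = (\<Sum>y\<in>UNIV. \<Sum>x\<in>UNIV. \<Sum>z\<in>UNIV. W y z x)"
    by (rule sum.swap)
  also have "\<dots> = (\<Sum>y\<in>UNIV. \<Sum>z\<in>UNIV. \<Sum>x\<in>UNIV. W y z x)"
    by (rule sum.cong[OF refl], rule sum.swap)
  finally show ?thesis .
qed

lemma fo: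
  fixes P :: "'n::finite \<Rightarrow> 'n \<Rightarrow> real" and D :: "'n \<Rightarrow> 'n \<Rightarrow> 'n \<Rightarrow> real"
  shows "(\<Sum>d\<in>UNIV. \<Sum>e\<in>UNIV. P d e * X d * (\<Sum>b\<in>UNIV. \<Sum>c\<in>UNIV. D e b c * Y b * Z c))
    = (\<Sum>a\<in>UNIV. \<Sum>b\<in>UNIV. \<Sum>c\<in>UNIV. (\<Sum>e\<in>UNIV. P a e * D e b c) * X a * Y b * Z c)"
proof -
  have "(\<Sum>d\<in>UNIV. \<Sum>e\<in>UNIV. P d e * X d * (\<Sum>b\<in>UNIV. \<Sum>c\<in>UNIV. D e b c * Y b * Z c))
     = (\<Sum>d\<in>UNIV. \<Sum>e\<in>UNIV. \<Sum>b\<in>UNIV. \<Sum>c\<in>UNIV. P d e * D e b c * X d * Y b * Z c)"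
    by (simp add: sum_distrib_left mult_ac)
  also have "\<dots> = (\<Sum>d\<in>UNIV. \<Sum>b\<in>UNIV. \<Sum>c\<in>UNIV. \<Sum>e\<in>UNIV. P d e * D e b c * X d * Y b * Z c)"
    by (rule sum.cong[OF refl], rule rot3)
  also have "\<dots> = (\<Sum>a\<in>UNIV. \<Sum>b\<in>UNIV. \<Sum>c\<in>UNIV. (\<Sum>e\<in>UNIV. P a e * D e b c) * X a * Y b * Z c)"
    by (simp add: sum_distrib_right)
  finally show ?thesis .
qed

lemma so:
  fixes P :: "'n::finite \<Rightarrow> 'n \<Rightarrow> real"
  assumes anti: "\<And>a b. P a b = - P b a" and sym: "\<And>i j. Z2 i j = Z2 j i"
  shows "(\<Sum>d\<in>UNIV. \<Sum>e\<in>UNIV. P d e * X d * (\<Sum>b\<in>UNIV. \<Sum>c\<in>UNIV. P b c * Y b * Z2 e c))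
     + (\<Sum>d\<in>UNIV. \<Sum>e\<in>UNIV. P d e * Y d * (\<Sum>b\<in>UNIV. \<Sum>c\<in>UNIV. P b c * Z2 e b * X c)) = 0"
proof -
  have 1: "(\<Sum>d\<in>UNIV. \<Sum>e\<in>UNIV. P d e * X d * (\<Sum>b\<in>UNIV. \<Sum>c\<in>UNIV. P b c * Y b * Z2 e c))
     = (\<Sum>d\<in>UNIV. \<Sum>e\<in>UNIV. \<Sum>b\<in>UNIV. \<Sum>c\<in>UNIV. P d e * P b c * X d * Y b * Z2 e c)"
    by (simp add: sum_distrib_left mult_ac)
  have 2: "(\<Sum>d\<in>UNIV. \<Sum>e\<in>UNIV. P d e * Y d * (\<Sum>b\<in>UNIV. \<Sum>c\<in>UNIV. P b c * Z2 e b * X c))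
     = (\<Sum>d\<in>UNIV. \<Sum>e\<in>UNIV. \<Sum>b\<in>UNIV. \<Sum>c\<in>UNIV. P d e * P b c * Y d * X c * Z2 e b)"
    by (simp add: sum_distrib_left mult_ac)
  define V where "V d e b c = P d e * P b c * Y d * X c * Z2 e b" for d e b c
  have r: "(\<Sum>d\<in>UNIV. \<Sum>e\<in>UNIV. \<Sum>b\<in>UNIV. \<Sum>c\<in>UNIV. V d e b c)
      = (\<Sum>c\<in>UNIV. \<Sum>b\<in>UNIV. \<Sum>d\<in>UNIV. \<Sum>e\<in>UNIV. V d e b c)"
  proof -
    have "(\<Sum>d\<in>UNIV. \<Sum>e\<in>UNIV. \<Sum>b\<in>UNIV. \<Sum>c\<in>UNIV. V d e b c)
       = (\<Sum>d\<in>UNIV. \<Sum>e\<in>UNIV. \<Sum>c\<in>UNIV. \<Sum>b\<in>UNIV. V d e b c)"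
      by (intro sum.cong[OF refl] sum.swap)
    also have "\<dots> = (\<Sum>c\<in>UNIV. \<Sum>b\<in>UNIV. \<Sum>d\<in>UNIV. \<Sum>e\<in>UNIV. V d e b c)"
    proof -
      have "(\<Sum>d\<in>UNIV. \<Sum>e\<in>UNIV. \<Sum>c\<in>UNIV. \<Sum>b\<in>UNIV. V d e b c)
         = (\<Sum>d\<in>UNIV. \<Sum>c\<in>UNIV. \<Sum>b\<in>UNIV. \<Sum>e\<in>UNIV. V d e b c)"
        by (rule sum.cong[OF refl], rule rot3)
      also have "\<dots> = (\<Sum>c\<in>UNIV. \<Sum>b\<in>UNIV. \<Sum>d\<in>UNIV. \<Sum>e\<in>UNIV. V d e b c)"
        by (rule rot3)
      finally show ?thesis .
    qed
    finally show ?thesis .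
  qed
  have pw: "V b c e d = - (P d e * P b c * X d * Y b * Z2 e c)" for d e b c
    unfolding V_def using anti[of e d] sym[of c e] by simp
  have "(\<Sum>c\<in>UNIV. \<Sum>b\<in>UNIV. \<Sum>d\<in>UNIV. \<Sum>e\<in>UNIV. V d e b c)
     = - (\<Sum>d\<in>UNIV. \<Sum>e\<in>UNIV. \<Sum>b\<in>UNIV. \<Sum>c\<in>UNIV. P d e * P b c * X d * Y b * Z2 e c)"
    by (simp only: pw sum_negf)
  then show ?thesis using 1 2 r unfolding V_def by simp
qed

lemma split_br:
  fixes P :: "'n::finite \<Rightarrow> 'n \<Rightarrow> real"
  shows "(\<Sum>d\<in>UNIV. \<Sum>e\<in>UNIV. P d e * X d * (\<Sum>b\<in>UNIV. \<Sum>c\<in>UNIV.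
       D e b c * Y b * Z c + P b c * Y2 e b * Z c + P b c * Y b * Z2 e c))
   = (\<Sum>d\<in>UNIV. \<Sum>e\<in>UNIV. P d e * X d * (\<Sum>b\<in>UNIV. \<Sum>c\<in>UNIV. D e b c * Y b * Z c))
   + (\<Sum>d\<in>UNIV. \<Sum>e\<in>UNIV. P d e * X d * (\<Sum>b\<in>UNIV. \<Sum>c\<in>UNIV. P b c * Y2 e b * Z c))
   + (\<Sum>d\<in>UNIV. \<Sum>e\<in>UNIV. P d e * X d * (\<Sum>b\<in>UNIV. \<Sum>c\<in>UNIV. P b c * Y b * Z2 e c))"
  by (simp add: sum.distrib distrib_left)

lemma jac_alg:
  fixes P :: "'n::finite \<Rightarrow> 'n \<Rightarrow> real"
  assumes anti: "\<And>a b. P a b = - P b a"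
    and sF: "\<And>i j. Fs i j = Fs j i" and sG: "\<And>i j. Gs i j = Gs j i" and sH: "\<And>i j. Hs i j = Hs j i"
  shows "(\<Sum>d\<in>UNIV. \<Sum>e\<in>UNIV. P d e * F d * (\<Sum>b\<in>UNIV. \<Sum>c\<in>UNIV.
       D e b c * G b * H c + P b c * Gs e b * H c + P b c * G b * Hs e c))
   + (\<Sum>d\<in>UNIV. \<Sum>e\<in>UNIV. P d e * G d * (\<Sum>b\<in>UNIV. \<Sum>c\<in>UNIV.
       D e b c * H b * F c + P b c * Hs e b * F c + P b c * H b * Fs e c))
   + (\<Sum>d\<in>UNIV. \<Sum>e\<in>UNIV. P d e * H d * (\<Sum>b\<in>UNIV. \<Sum>c\<in>UNIV.
       D e b c * F b * G c + P b c * Fs e b * G c + P b c * F b * Gs e c))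
   = (\<Sum>a\<in>UNIV. \<Sum>b\<in>UNIV. \<Sum>c\<in>UNIV.
       (\<Sum>e\<in>UNIV. P a e * D e b c + P b e * D e c a + P c e * D e a b) * F a * G b * H c)"
proof -
  define K where "K a b c = (\<Sum>e\<in>UNIV. P a e * D e b c)" for a b c
  have f1: "(\<Sum>d\<in>UNIV. \<Sum>e\<in>UNIV. P d e * F d * (\<Sum>b\<in>UNIV. \<Sum>c\<in>UNIV. D e b c * G b * H c))
    = (\<Sum>a\<in>UNIV. \<Sum>b\<in>UNIV. \<Sum>c\<in>UNIV. K a b c * F a * G b * H c)"
    unfolding K_def by (rule fo)
  have f2: "(\<Sum>d\<in>UNIV. \<Sum>e\<in>UNIV. P d e * G d * (\<Sum>b\<in>UNIV. \<Sum>c\<in>UNIV. D e b c * H b * F c))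
    = (\<Sum>a\<in>UNIV. \<Sum>b\<in>UNIV. \<Sum>c\<in>UNIV. K b c a * F a * G b * H c)"
  proof -
    have "(\<Sum>d\<in>UNIV. \<Sum>e\<in>UNIV. P d e * G d * (\<Sum>b\<in>UNIV. \<Sum>c\<in>UNIV. D e b c * H b * F c))
      = (\<Sum>b\<in>UNIV. \<Sum>c\<in>UNIV. \<Sum>a\<in>UNIV. K b c a * G b * H c * F a)"
      unfolding K_def by (rule fo)
    also have "\<dots> = (\<Sum>a\<in>UNIV. \<Sum>b\<in>UNIV. \<Sum>c\<in>UNIV. K b c a * G b * H c * F a)"
      by (rule rot3[symmetric])
    finally show ?thesis by (simp add: mult_ac)
  qed
  have f3: "(\<Sum>d\<in>UNIV. \<Sum>e\<in>UNIV. P d e * H d * (\<Sum>b\<in>UNIV. \<Sum>c\<in>UNIV. D e b c * F b * G c))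
    = (\<Sum>a\<in>UNIV. \<Sum>b\<in>UNIV. \<Sum>c\<in>UNIV. K c a b * F a * G b * H c)"
  proof -
    have "(\<Sum>d\<in>UNIV. \<Sum>e\<in>UNIV. P d e * H d * (\<Sum>b\<in>UNIV. \<Sum>c\<in>UNIV. D e b c * F b * G c))
      = (\<Sum>c\<in>UNIV. \<Sum>a\<in>UNIV. \<Sum>b\<in>UNIV. K c a b * H c * F a * G b)"
      unfolding K_def by (rule fo)
    also have "\<dots> = (\<Sum>a\<in>UNIV. \<Sum>b\<in>UNIV. \<Sum>c\<in>UNIV. K c a b * H c * F a * G b)"
      by (rule rot3)
    finally show ?thesis by (simp add: mult_ac)
  qed
  note s1 = so[of P Hs F G, OF anti sH]
  note s2 = so[of P Fs G H, OF anti sF]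
  note s3 = so[of P Gs H F, OF anti sG]
  have fin: "(\<Sum>a\<in>UNIV. \<Sum>b\<in>UNIV. \<Sum>c\<in>UNIV. K a b c * F a * G b * H c)
    + (\<Sum>a\<in>UNIV. \<Sum>b\<in>UNIV. \<Sum>c\<in>UNIV. K b c a * F a * G b * H c)
    + (\<Sum>a\<in>UNIV. \<Sum>b\<in>UNIV. \<Sum>c\<in>UNIV. K c a b * F a * G b * H c)
    = (\<Sum>a\<in>UNIV. \<Sum>b\<in>UNIV. \<Sum>c\<in>UNIV.
       (\<Sum>e\<in>UNIV. P a e * D e b c + P b e * D e c a + P c e * D e a b) * F a * G b * H c)"
    unfolding K_def by (simp add: sum.distrib distrib_right)
  show ?thesis
    unfolding split_br using f1 f2 f3 s1 s2 s3 fin by linarith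
qed

lemma pbracket_has_derivative:
  fixes P :: "real^'n::finite \<Rightarrow> real^'n^'n"
  assumes dP: "\<And>a b. (\<lambda>v. P v $ a $ b) differentiable at u"
    and dg: "\<And>i. pd i g differentiable at u" and dh: "\<And>i. pd i h differentiable at u"
  shows "(pbracket P g h has_derivative (\<lambda>x. \<Sum>b\<in>UNIV. \<Sum>c\<in>UNIV.
      frechet_derivative (\<lambda>v. P v $ b $ c) (at u) x * pd b g u * pd c h u
      + P u $ b $ c * frechet_derivative (pd b g) (at u) x * pd c h u
      + P u $ b $ c * pd b g u * frechet_derivative (pd c h) (at u) x)) (at u)"
proof -
  have m: "((\<lambda>v. P v $ b $ c * pd b g v * pd c h v) has_derivative (\<lambda>x.
      frechet_derivative (\<lambda>v. P v $ b $ c) (at u) x * pd b g u * pd c h u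
      + P u $ b $ c * frechet_derivative (pd b g) (at u) x * pd c h u
      + P u $ b $ c * pd b g u * frechet_derivative (pd c h) (at u) x)) (at u)" for b c
  proof -
    have 1: "((\<lambda>v. P v $ b $ c) has_derivative frechet_derivative (\<lambda>v. P v $ b $ c) (at u)) (at u)"
      using dP frechet_derivative_works by blast
    have 2: "(pd b g has_derivative frechet_derivative (pd b g) (at u)) (at u)"
      using dg frechet_derivative_works by blast
    have 3: "(pd c h has_derivative frechet_derivative (pd c h) (at u)) (at u)"
      using dh frechet_derivative_works by blast
    show ?thesis
      using has_derivative_mult[OF has_derivative_mult[OF 1 2] 3]
      by (rule has_derivative_eq_rhs) (auto simp: fun_eq_iff algebra_simps)
  qed
  show ?thesis
    unfolding pbracket_def[abs_def]
    by (intro has_derivative_sum m)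
qed

lemma pd_pbracket:
  fixes P :: "real^'n::finite \<Rightarrow> real^'n^'n"
  assumes dP: "\<And>a b. (\<lambda>v. P v $ a $ b) differentiable at u"
    and dg: "\<And>i. pd i g differentiable at u" and dh: "\<And>i. pd i h differentiable at u"
  shows "pd e (pbracket P g h) u = (\<Sum>b\<in>UNIV. \<Sum>c\<in>UNIV.
      pd e (\<lambda>v. P v $ b $ c) u * pd b g u * pd c h u
      + P u $ b $ c * pd e (pd b g) u * pd c h u
      + P u $ b $ c * pd b g u * pd e (pd c h) u)"
  using pd_has[OF pbracket_has_derivative[OF dP dg dh]] unfolding pd_def .

lemma pbracket_differentiable:
  fixes P :: "real^'n::finite \<Rightarrow> real^'n^'n"
  assumes dP: "\<And>a b. (\<lambda>v. P v $ a $ b) differentiable at u"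
    and dg: "\<And>i. pd i g differentiable at u" and dh: "\<And>i. pd i h differentiable at u"
  shows "pbracket P g h differentiable at u"
  using pbracket_has_derivative[OF dP dg dh] unfolding differentiable_def by blast

lemma coord_has_derivative: "((\<lambda>v::real^'n::finite. v $ a) has_derivative (\<lambda>x. x $ a)) (at u)"
  using bounded_linear_vec_nth bounded_linear_imp_has_derivative by blast

lemma pd_coord: "pd i (\<lambda>v::real^'n::finite. v $ a) = (\<lambda>v. if i = a then 1 else 0)"
proof
  fix v :: "real^'n"
  show "pd i (\<lambda>v::real^'n::finite. v $ a) v = (if i = a then 1 else 0)"
    by (subst pd_has[OF coord_has_derivative]) (auto simp: axis_def)
qed

lemma pd_const: "pd i (\<lambda>v::real^'n::finite. c) u = 0"
proof -
  have "((\<lambda>v::real^'n. c) has_derivative (\<lambda>x. 0)) (at u)" by simp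
  from pd_has[OF this] show ?thesis by simp
qed

lemma C2_coord: "C2_on U (\<lambda>v::real^'n::finite. v $ a)"
  unfolding C2_on_def C1_on_def pd_coord
  using coord_has_derivative by (auto simp: differentiable_def pd_const)

definition Kt :: "(real^'n::finite \<Rightarrow> real^'n^'n) \<Rightarrow> real^'n \<Rightarrow> 'n \<Rightarrow> 'n \<Rightarrow> 'n \<Rightarrow> real" where
  "Kt P u a b c = (\<Sum>e\<in>UNIV. P u $ a $ e * pd e (\<lambda>v. P v $ b $ c) u
     + P u $ b $ e * pd e (\<lambda>v. P v $ c $ a) u + P u $ c $ e * pd e (\<lambda>v. P v $ a $ b) u)"

lemma jacobi_expand:
  fixes P :: "real^'n::finite \<Rightarrow> real^'n^'n"
  assumes U: "open U" "u \<in> U"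
    and dP: "\<And>a b. (\<lambda>v. P v $ a $ b) differentiable at u"
    and anti: "\<And>a b. P u $ a $ b = - P u $ b $ a"
    and f: "C2_on U f" and g: "C2_on U g" and h: "C2_on U h"
  shows "pbracket P f (pbracket P g h) u + pbracket P g (pbracket P h f) u
             + pbracket P h (pbracket P f g) u
    = (\<Sum>a\<in>UNIV. \<Sum>b\<in>UNIV. \<Sum>c\<in>UNIV. Kt P u a b c * pd a f u * pd b g u * pd c h u)"
proof -
  have df: "\<And>i. pd i f differentiable at u" using f U unfolding C2_on_def C1_on_def by auto
  have dg: "\<And>i. pd i g differentiable at u" using g U unfolding C2_on_def C1_on_def by auto
  have dh: "\<And>i. pd i h differentiable at u" using h U unfolding C2_on_def C1_on_def by auto
  show ?thesis
    unfolding pbracket_def[of P f "pbracket P g h" u] pbracket_def[of P g "pbracket P h f" u]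
      pbracket_def[of P h "pbracket P f g" u]
    unfolding pd_pbracket[OF dP dg dh] pd_pbracket[OF dP dh df] pd_pbracket[OF dP df dg]
    unfolding Kt_def
    by (rule jac_alg[where P="\<lambda>a b. P u $ a $ b" and Fs="\<lambda>i j. pd i (pd j f) u"
        and Gs="\<lambda>i j. pd i (pd j g) u" and Hs="\<lambda>i j. pd i (pd j h) u", OF anti])
       (auto intro: schwarz[OF U f] schwarz[OF U g] schwarz[OF U h])
qed

lemma poisson_suff:
  fixes P :: "real^'n::finite \<Rightarrow> real^'n^'n"
  assumes U: "open U"
    and dP: "\<And>u a b. u \<in> U \<Longrightarrow> (\<lambda>v. P v $ a $ b) differentiable at u"
    and anti: "\<And>u a b. u \<in> U \<Longrightarrow> P u $ a $ b = - P u $ b $ a"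
    and K: "\<And>u a b c. u \<in> U \<Longrightarrow> Kt P u a b c = 0"
  shows "is_poisson U P"
  unfolding is_poisson_def
proof (intro allI impI ballI)
  fix f g h u assume fgh: "C2_on U f \<and> C2_on U g \<and> C2_on U h" and u: "u \<in> U"
  show "pbracket P f (pbracket P g h) u + pbracket P g (pbracket P h f) u
             + pbracket P h (pbracket P f g) u = 0"
    using fgh by (subst jacobi_expand[OF U u dP[OF u] anti[OF u]]) (auto simp: K[OF u])
qed

lemma mult_delta: "(x::real) * (if p then 1 else 0) = (if p then x else 0)" by simp

lemma poisson_nec:
  fixes P :: "real^'n::finite \<Rightarrow> real^'n^'n"
  assumes Pois: "is_poisson U P" and U: "open U" "u \<in> U"
    and dP: "\<And>a b. (\<lambda>v. P v $ a $ b) differentiable at u"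
    and anti: "\<And>a b. P u $ a $ b = - P u $ b $ a"
  shows "Kt P u a b c = 0"
proof -
  have "pbracket P (\<lambda>v. v $ a) (pbracket P (\<lambda>v. v $ b) (\<lambda>v. v $ c)) u
     + pbracket P (\<lambda>v. v $ b) (pbracket P (\<lambda>v. v $ c) (\<lambda>v. v $ a)) u
     + pbracket P (\<lambda>v. v $ c) (pbracket P (\<lambda>v. v $ a) (\<lambda>v. v $ b)) u = 0"
    using Pois U C2_coord unfolding is_poisson_def by blast
  then show ?thesis
    by (subst (asm) jacobi_expand[OF U dP anti C2_coord C2_coord C2_coord]) (simp add: pd_coord mult_delta)
qed

lemma exhaust_5:
  fixes x :: 5
  shows "x = 1 \<or> x = 2 \<or> x = 3 \<or> x = 4 \<or> x = 5"
proof (induct x)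
  case (of_int z)
  then have "z = 0 \<or> z = 1 \<or> z = 2 \<or> z = 3 \<or> z = 4" by fastforce
  then show ?case by auto
qed

lemma UNIV_5: "UNIV = {1, 2, 3, 4, 5::5}"
  using exhaust_5 by auto

lemma sum_5: "sum f (UNIV::5 set) = f 1 + f 2 + f 3 + f 4 + f 5"
  unfolding UNIV_5 by (simp add: ac_simps)

lemma vector5 [simp]:
  "(vector [x1,x2,x3,x4,x5] :: ('a::zero)^5) $ 1 = x1"
  "(vector [x1,x2,x3,x4,x5] :: ('a::zero)^5) $ 2 = x2"
  "(vector [x1,x2,x3,x4,x5] :: ('a::zero)^5) $ 3 = x3"
  "(vector [x1,x2,x3,x4,x5] :: ('a::zero)^5) $ 4 = x4"
  "(vector [x1,x2,x3,x4,x5] :: ('a::zero)^5) $ 5 = x5"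
  unfolding vector_def by simp_all

definition M0 :: "real \<Rightarrow> real \<Rightarrow> real \<Rightarrow> real^5^5" where
  "M0 t a b = vector [vector [0, 0, 0, 0, 0],
             vector [0, 0, 0, 0, 1 + t * b],
             vector [0, 0, 0, 1 + t * a, 0],
             vector [0, 0, - 1 - t * a, 0, 0],
             vector [0, - 1 - t * b, 0, 0, 0]]"

definition M1 :: "real^5^5" where
  "M1 = vector [vector [0, 0, 0, -1, 0], vector [0, 0, 0, 0, 0], vector [0, 0, 0, 0, 0],
                vector [1, 0, 0, 0, 0], vector [0, 0, 0, 0, 0]]"

definition M2 :: "real^5^5" where
  "M2 = vector [vector [0, 0, 0, 0, -1], vector [0, 0, 0, 0, 0], vector [0, 0, 0, 0, 0],
                vector [0, 0, 0, 0, 0], vector [1, 0, 0, 0, 0]]"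

lemma Kt_special:
  fixes P :: "real^5 \<Rightarrow> real^5^5"
  assumes Pu: "\<And>i j. P u $ i $ j = M0 t a b $ i $ j + M1 $ i $ j * U + M2 $ i $ j * V"
    and Pd: "\<And>e i j. pd e (\<lambda>v. P v $ i $ j) u = M1 $ i $ j * DU e + M2 $ i $ j * DV e"
    and D0: "DU 4 = 0" "DU 5 = 0" "DV 4 = 0" "DV 5 = 0"
  shows "Kt P u x y z = (if (x,y,z) \<in> {(1,4,5),(4,5,1),(5,1,4)} then 1
      else if (x,y,z) \<in> {(1,5,4),(5,4,1),(4,1,5)} then -1 else 0) *
      (U * DV 1 - (1 + t * a) * DV 3 - V * DU 1 + (1 + t * b) * DU 2)"
proof -
  define XU where "XU x = (\<Sum>e\<in>UNIV. P u $ x $ e * DU e)" for x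
  define XV where "XV x = (\<Sum>e\<in>UNIV. P u $ x $ e * DV e)" for x
  have K: "Kt P u x y z = M1 $ y $ z * XU x + M2 $ y $ z * XV x + M1 $ z $ x * XU y + M2 $ z $ x * XV y
     + M1 $ x $ y * XU z + M2 $ x $ y * XV z"
    unfolding Kt_def Pd XU_def XV_def
    by (simp add: sum.distrib sum_distrib_left distrib_left mult_ac)
  have xu: "XU 1 = 0" "XU 2 = 0" "XU 3 = 0" "XU 4 = U * DU 1 - (1 + t * a) * DU 3"
    "XU 5 = V * DU 1 - (1 + t * b) * DU 2"
    unfolding XU_def by (simp_all add: sum_5 Pu D0 M0_def M1_def M2_def algebra_simps)
  have xv: "XV 1 = 0" "XV 2 = 0" "XV 3 = 0" "XV 4 = U * DV 1 - (1 + t * a) * DV 3"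
    "XV 5 = V * DV 1 - (1 + t * b) * DV 2"
    unfolding XV_def by (simp_all add: sum_5 Pu D0 M0_def M1_def M2_def algebra_simps)
  show ?thesis
    unfolding K
    using exhaust_5[of x] exhaust_5[of y] exhaust_5[of z]
    by (elim disjE) (simp_all add: xu xv M1_def M2_def)
qed

lemma proj3_nth [simp]: "proj3 u $ 1 = u $ 1" "proj3 u $ 2 = u $ 2" "proj3 u $ 3 = u $ 3"
  unfolding proj3_def by simp_all

lemma linear_proj3: "linear proj3"
proof (rule linearI)
  fix x y :: "real^5" and c :: real
  show "proj3 (x + y) = proj3 x + proj3 y"
    by (simp add: vec_eq_iff forall_3)
  show "proj3 (c *\<^sub>R x) = c *\<^sub>R proj3 x"
    by (simp add: vec_eq_iff forall_3)
qed

lemma bl_proj3: "bounded_linear proj3"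
  using linear_proj3 linear_conv_bounded_linear by blast

lemma proj3_has_derivative: "(proj3 has_derivative proj3) (at u)"
  using bl_proj3 bounded_linear_imp_has_derivative by blast

lemma open_U: "open B \<Longrightarrow> open {u. proj3 u \<in> B}"
proof -
  assume "open B"
  then have "open (proj3 -` B)"
    by (rule continuous_open_vimage) (rule linear_continuous_at[OF bl_proj3])
  then show ?thesis by (simp add: vimage_def)
qed

lemma pd_comp_proj3:
  assumes "g differentiable at (proj3 u)"
  shows "((\<lambda>v. g (proj3 v)) has_derivative (\<lambda>x. frechet_derivative g (at (proj3 u)) (proj3 x))) (at u)"
proof -
  have "(g has_derivative frechet_derivative g (at (proj3 u))) (at (proj3 u))"
    using assms frechet_derivative_works by blast
  from has_derivative_compose[OF proj3_has_derivative this] show ?thesis by (simp add: o_def)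
qed

lemma proj3_axis:
  "proj3 (axis 1 1) = axis 1 1" "proj3 (axis 2 1) = axis 2 1" "proj3 (axis 3 1) = axis 3 1"
  "proj3 (axis 4 1) = 0" "proj3 (axis 5 1) = 0"
  by (simp_all add: vec_eq_iff forall_3 axis_def)

lemma Q_alg:
  fixes w1 w2 w3 s11 s12 s13 s21 s23 s31 s32 t a b :: real
  assumes "w1 \<noteq> 0" "s12 = s21" "s13 = s31" "s23 = s32"
  shows "(w3/w1) * ((s12 * w1 - w2 * s11)/(w1 * w1)) - (1+t*a)*((s32 * w1 - w2 * s31)/(w1 * w1))
     - (w2/w1)*((s13 * w1 - w3 * s11)/(w1 * w1)) + (1+t*b)*((s23 * w1 - w3 * s21)/(w1 * w1))
     = t*((b-a) * w1 * s32 + a * w2 * s13 - b * w3 * s21)/(w1 * w1)"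
  using assms by (simp add: field_simps)

lemma ratio_has_derivative:
  fixes f g :: "'a::real_normed_vector \<Rightarrow> real"
  assumes f: "f differentiable at q" and g: "g differentiable at q" and g0: "g q \<noteq> 0"
  shows "((\<lambda>x. f x / g x) has_derivative (\<lambda>y. (frechet_derivative f (at q) y * g q
      - f q * frechet_derivative g (at q) y) / (g q * g q))) (at q)"
  using has_derivative_divide'[OF f[unfolded frechet_derivative_works] g[unfolded frechet_derivative_works] g0] .

lemma ratio_facts:
  fixes w :: "real^3 \<Rightarrow> real"
  assumes w: "C2_on B w" and q: "q \<in> B" and w1: "pd 1 w q \<noteq> 0"
  shows "(\<lambda>q. pd j w q / pd 1 w q) differentiable at q"
    and "frechet_derivative (\<lambda>q. pd j w q / pd 1 w q) (at q) (axis k 1)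
       = (pd k (pd j w) q * pd 1 w q - pd j w q * pd k (pd 1 w) q) / (pd 1 w q * pd 1 w q)"
proof -
  have dj: "pd j w differentiable at q" and d1: "pd 1 w differentiable at q"
    using w q unfolding C2_on_def C1_on_def by auto
  note h = ratio_has_derivative[OF dj d1 w1]
  show "(\<lambda>q. pd j w q / pd 1 w q) differentiable at q"
    using h unfolding differentiable_def by blast
  show "frechet_derivative (\<lambda>q. pd j w q / pd 1 w q) (at q) (axis k 1)
       = (pd k (pd j w) q * pd 1 w q - pd j w q * pd k (pd 1 w) q) / (pd 1 w q * pd 1 w q)"
    unfolding frechet_derivative_at[OF h, symmetric] by (simp add: pd_def)
qed

lemma entries:
  "(P0_mat w v + t *\<^sub>R P1_mat a b v) $ i $ j = M0 t a b $ i $ j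
     + M1 $ i $ j * (pd 3 w (proj3 v) / pd 1 w (proj3 v)) + M2 $ i $ j * (pd 2 w (proj3 v) / pd 1 w (proj3 v))"
  using exhaust_5[of i] exhaust_5[of j]
  by (elim disjE) (simp_all add: P0_mat_def P1_mat_def Let_def M0_def M1_def M2_def algebra_simps)

lemma M_anti: "M0 t a b $ i $ j = - M0 t a b $ j $ i" "M1 $ i $ j = - M1 $ j $ i" "M2 $ i $ j = - M2 $ j $ i"
  using exhaust_5[of i] exhaust_5[of j]
  by (elim disjE; simp add: M0_def M1_def M2_def)+

definition sgn3 :: "5 \<Rightarrow> 5 \<Rightarrow> 5 \<Rightarrow> real" where
  "sgn3 x y z = (if (x,y,z) \<in> {(1,4,5),(4,5,1),(5,1,4)} then 1
      else if (x,y,z) \<in> {(1,5,4),(5,4,1),(4,1,5)} then -1 else 0)"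

definition hir :: "real \<Rightarrow> real \<Rightarrow> (real^3 \<Rightarrow> real) \<Rightarrow> real^3 \<Rightarrow> real" where
  "hir a b w q = (b - a) * pd 1 w q * pd 3 (pd 2 w) q + a * pd 2 w q * pd 1 (pd 3 w) q
             - b * pd 3 w q * pd 2 (pd 1 w) q"

lemma Kt_formula:
  fixes w :: "real^3 \<Rightarrow> real" and a b t :: real
  assumes B: "open B" and w: "C2_on B w" and q: "proj3 u \<in> B" and w1: "pd 1 w (proj3 u) \<noteq> 0"
  defines "Pt \<equiv> (\<lambda>v. P0_mat w v + t *\<^sub>R P1_mat a b v)"
  shows "\<And>i j. (\<lambda>v. Pt v $ i $ j) differentiable at u"
    and "\<And>i j. Pt u $ i $ j = - Pt u $ j $ i"
    and "Kt Pt u x y z = sgn3 x y z * (t * hir a b w (proj3 u) / (pd 1 w (proj3 u) * pd 1 w (proj3 u)))"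
proof -
  define q where "q = proj3 u"
  define Uf where "Uf = (\<lambda>q. pd 3 w q / pd 1 w q)"
  define Vf where "Vf = (\<lambda>q. pd 2 w q / pd 1 w q)"
  define FU where "FU = frechet_derivative Uf (at q)"
  define FV where "FV = frechet_derivative Vf (at q)"
  have dU: "Uf differentiable at q" and dV: "Vf differentiable at q"
    unfolding Uf_def Vf_def q_def using ratio_facts(1)[OF w q w1] by auto
  have hU: "((\<lambda>v. Uf (proj3 v)) has_derivative (\<lambda>x. FU (proj3 x))) (at u)"
    unfolding FU_def q_def by (rule pd_comp_proj3) (use dU q_def in simp)
  have hV: "((\<lambda>v. Vf (proj3 v)) has_derivative (\<lambda>x. FV (proj3 x))) (at u)"
    unfolding FV_def q_def by (rule pd_comp_proj3) (use dV q_def in simp)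
  have ent: "(\<lambda>v. Pt v $ i $ j) = (\<lambda>v. M0 t a b $ i $ j + M1 $ i $ j * Uf (proj3 v) + M2 $ i $ j * Vf (proj3 v))"
    for i j unfolding Pt_def Uf_def Vf_def by (simp only: entries)
  have hP: "((\<lambda>v. Pt v $ i $ j) has_derivative (\<lambda>x. M1 $ i $ j * FU (proj3 x) + M2 $ i $ j * FV (proj3 x))) (at u)" for i j
    unfolding ent
    using has_derivative_add[OF has_derivative_add[OF has_derivative_const has_derivative_mult_right[OF hU]]
        has_derivative_mult_right[OF hV]]
    by (rule has_derivative_eq_rhs) (simp add: fun_eq_iff)
  show "\<And>i j. (\<lambda>v. Pt v $ i $ j) differentiable at u"
    using hP unfolding differentiable_def by blast
  show "\<And>i j. Pt u $ i $ j = - Pt u $ j $ i"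
  proof -
    fix i j
    have "Pt u $ i $ j = M0 t a b $ i $ j + M1 $ i $ j * Uf (proj3 u) + M2 $ i $ j * Vf (proj3 u)"
      "Pt u $ j $ i = M0 t a b $ j $ i + M1 $ j $ i * Uf (proj3 u) + M2 $ j $ i * Vf (proj3 u)"
      using ent[of i j] ent[of j i] by (metis)+
    then show "Pt u $ i $ j = - Pt u $ j $ i"
      using M_anti(1)[of t a b i j] M_anti(2)[of i j] M_anti(3)[of i j] by (simp add: algebra_simps)
  qed
  define DU where "DU e = FU (proj3 (axis e 1))" for e
  define DV where "DV e = FV (proj3 (axis e 1))" for e
  have linU: "linear FU" and linV: "linear FV"
    using hU hV unfolding FU_def FV_def
    using dU dV frechet_derivative_works has_derivative_linear by blast+
  have Pd: "pd e (\<lambda>v. Pt v $ i $ j) u = M1 $ i $ j * DU e + M2 $ i $ j * DV e" for e i j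
    unfolding DU_def DV_def using pd_has[OF hP] .
  have D0: "DU 4 = 0" "DU 5 = 0" "DV 4 = 0" "DV 5 = 0"
    unfolding DU_def DV_def proj3_axis using linU linV by (simp_all add: linear_0)
  have Pu: "Pt u $ i $ j = M0 t a b $ i $ j + M1 $ i $ j * Uf q + M2 $ i $ j * Vf q" for i j
    using ent[of i j] unfolding q_def by metis
  have K: "Kt Pt u x y z = sgn3 x y z * (Uf q * DV 1 - (1 + t * a) * DV 3 - Vf q * DU 1 + (1 + t * b) * DU 2)"
    unfolding sgn3_def by (rule Kt_special[OF Pu Pd D0])
  have qB: "q \<in> B" and w1q: "pd 1 w q \<noteq> 0" using q w1 q_def by auto
  have du: "DU 1 = (pd 1 (pd 3 w) q * pd 1 w q - pd 3 w q * pd 1 (pd 1 w) q) / (pd 1 w q * pd 1 w q)"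
    "DU 2 = (pd 2 (pd 3 w) q * pd 1 w q - pd 3 w q * pd 2 (pd 1 w) q) / (pd 1 w q * pd 1 w q)"
    unfolding DU_def proj3_axis FU_def Uf_def using ratio_facts(2)[OF w qB w1q] by simp_all
  have dv: "DV 1 = (pd 1 (pd 2 w) q * pd 1 w q - pd 2 w q * pd 1 (pd 1 w) q) / (pd 1 w q * pd 1 w q)"
    "DV 3 = (pd 3 (pd 2 w) q * pd 1 w q - pd 2 w q * pd 3 (pd 1 w) q) / (pd 1 w q * pd 1 w q)"
    unfolding DV_def proj3_axis FV_def Vf_def using ratio_facts(2)[OF w qB w1q] by simp_all
  have sym: "pd 1 (pd 2 w) q = pd 2 (pd 1 w) q" "pd 1 (pd 3 w) q = pd 3 (pd 1 w) q"
     "pd 2 (pd 3 w) q = pd 3 (pd 2 w) q"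
    using schwarz[OF B qB w] by auto
  have "Uf q * DV 1 - (1 + t * a) * DV 3 - Vf q * DU 1 + (1 + t * b) * DU 2
     = t * hir a b w q / (pd 1 w q * pd 1 w q)"
    unfolding du dv Uf_def Vf_def hir_def
    by (rule Q_alg[OF w1q sym])
  then show "Kt Pt u x y z = sgn3 x y z * (t * hir a b w (proj3 u) / (pd 1 w (proj3 u) * pd 1 w (proj3 u)))"
    using K q_def by simp
qed

lemma P1_poisson: "open U \<Longrightarrow> is_poisson U (P1_mat a b)"
proof (rule poisson_suff)
  fix u i j
  show "(\<lambda>v. P1_mat a b v $ i $ j) differentiable at u"
    unfolding P1_mat_def by simp
  show "P1_mat a b u $ i $ j = - P1_mat a b u $ j $ i"
    using exhaust_5[of i] exhaust_5[of j] by (elim disjE; simp add: P1_mat_def)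
  fix c
  show "Kt (P1_mat a b) u i j c = 0"
    unfolding Kt_def P1_mat_def pd_const by simp
qed

theorem corollary4p2:
  fixes a b :: real and w :: "real^3 \<Rightarrow> real" and B :: "(real^3) set"
  assumes "a \<noteq> 0" and "b \<noteq> 0" and "a \<noteq> b"
    and "open B" and "C2_on B w" and "\<forall>q\<in>B. pd 1 w q \<noteq> 0"
  shows "compatible_poisson_pencil {u. proj3 u \<in> B} (P0_mat w) (P1_mat a b) \<longleftrightarrow>
    (\<forall>q\<in>B. (b - a) * pd 1 w q * pd 3 (pd 2 w) q + a * pd 2 w q * pd 1 (pd 3 w) q
             - b * pd 3 w q * pd 2 (pd 1 w) q = 0)"
proof -
  let ?U = "{u. proj3 u \<in> B}"
  have oU: "open ?U" using open_U assms(4) .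
  note KF = Kt_formula[OF assms(4) assms(5)]
  have w1: "\<And>u. u \<in> ?U \<Longrightarrow> pd 1 w (proj3 u) \<noteq> 0" using assms(6) by auto
  show ?thesis
  proof
    assume pen: "compatible_poisson_pencil ?U (P0_mat w) (P1_mat a b)"
    show "\<forall>q\<in>B. (b - a) * pd 1 w q * pd 3 (pd 2 w) q + a * pd 2 w q * pd 1 (pd 3 w) q
             - b * pd 3 w q * pd 2 (pd 1 w) q = 0"
    proof
      fix q assume qB: "q \<in> B"
      define u :: "real^5" where "u = vector [q$1, q$2, q$3, 0, 0]"
      have pu: "proj3 u = q" unfolding u_def by (simp add: vec_eq_iff forall_3)
      have uU: "u \<in> ?U" using pu qB by simp
      have P: "is_poisson ?U (\<lambda>v. P0_mat w v + 1 *\<^sub>R P1_mat a b v)"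
        using pen unfolding compatible_poisson_pencil_def by blast
      have d1: "\<And>i j. (\<lambda>v. (P0_mat w v + 1 *\<^sub>R P1_mat a b v) $ i $ j) differentiable at u"
        using KF(1)[of u 1 a b] uU w1[OF uU] by blast
      have a1: "\<And>i j. (P0_mat w u + 1 *\<^sub>R P1_mat a b u) $ i $ j = - (P0_mat w u + 1 *\<^sub>R P1_mat a b u) $ j $ i"
        using KF(2)[of u 1 a b] uU w1[OF uU] by blast
      have "Kt (\<lambda>v. P0_mat w v + 1 *\<^sub>R P1_mat a b v) u 1 4 5 = 0"
        by (rule poisson_nec[OF P oU uU d1 a1])
      then have "1 * hir a b w q / (pd 1 w q * pd 1 w q) = 0"
        using KF(3)[of u 1 a b 1 4 5] uU w1[OF uU] pu by (simp add: sgn3_def)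
      then show "(b - a) * pd 1 w q * pd 3 (pd 2 w) q + a * pd 2 w q * pd 1 (pd 3 w) q
             - b * pd 3 w q * pd 2 (pd 1 w) q = 0"
        using assms(6) qB unfolding hir_def by simp
    qed
  next
    assume H: "\<forall>q\<in>B. (b - a) * pd 1 w q * pd 3 (pd 2 w) q + a * pd 2 w q * pd 1 (pd 3 w) q
             - b * pd 3 w q * pd 2 (pd 1 w) q = 0"
    have pt: "is_poisson ?U (\<lambda>v. P0_mat w v + t *\<^sub>R P1_mat a b v)" for t
    proof (rule poisson_suff[OF oU])
      fix u i j c assume uU: "u \<in> ?U"
      show "(\<lambda>v. (P0_mat w v + t *\<^sub>R P1_mat a b v) $ i $ j) differentiable at u"
        using KF(1)[of u t a b] uU w1[OF uU] by blast
      show "(P0_mat w u + t *\<^sub>R P1_mat a b u) $ i $ j = - (P0_mat w u + t *\<^sub>R P1_mat a b u) $ j $ i"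
        using KF(2)[of u t a b] uU w1[OF uU] by blast
      show "Kt (\<lambda>v. P0_mat w v + t *\<^sub>R P1_mat a b v) u i j c = 0"
        using KF(3)[of u t a b i j c] uU w1[OF uU] H by (simp add: hir_def)
    qed
    have p0: "is_poisson ?U (P0_mat w)"
      using pt[of 0] by simp
    show "compatible_poisson_pencil ?U (P0_mat w) (P1_mat a b)"
      unfolding compatible_poisson_pencil_def using p0 pt P1_poisson[OF oU] by blast
  qed
qed

end
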